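(* Let $D$ be an integral domain, $S$ a multiplicative subset of $D$, and $M$ a torsion-free unitary $D$-module. Then: (1) If $M$ is an $S$-Noetherian module, then $M$ is a locally $S$-Noetherian module. (2) If $M$ is a locally $S$-Noetherian module which has finite character, then $M$ is an $S$-Noetherian module.
   Context: A submodule $L$ of $M$ is $S$-finite if there exist $s\in S$ and a finitely generated submodule $F$ of $M$ with $Ls\subseteq F\subseteq L$; $M$ is $S$-Noetherian if every submodule is $S$-finite. $M$ is locally $S$-Noetherian if for each maximal ideal $\mathfrak{m}$ of $D$, $M_{\mathfrak{m}}$ is an $S$-Noetherian $D_{\mathfrak{m}}$-module (with $S$ viewed inside $D_{\mathfrak{m}}$). For a submodule $L$, $(L:M)=\{d\in D\mid Md\subseteq L\}$. $M$ has finite character if for each nonzero $a\in M$ with $(aD:M)\neq D$, the ideal $(aD:M)$ is contained in only finitely many maximal ideals of $D$. *)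

theory Defs
  imports "HOL-Algebra.Module" "HOL-Algebra.Ideal"
begin

definition mod_span :: "('a, 'c) ring_scheme \<Rightarrow> ('a, 'b) module \<Rightarrow> 'b set \<Rightarrow> 'b set" where
  "mod_span R M G = \<Inter>{N. submodule N R M \<and> G \<subseteq> N}"

definition fin_gen_submodule :: "('a, 'c) ring_scheme \<Rightarrow> ('a, 'b) module \<Rightarrow> 'b set \<Rightarrow> bool" where
  "fin_gen_submodule R M F \<longleftrightarrow>
     (\<exists>G. finite G \<and> G \<subseteq> carrier M \<and> F = mod_span R M G)"

definition S_finite :: "('a, 'c) ring_scheme \<Rightarrow> ('a, 'b) module \<Rightarrow> 'a set \<Rightarrow> 'b set \<Rightarrow> bool" where
  "S_finite R M S L \<longleftrightarrow>
     (\<exists>s\<in>S. \<exists>F. fin_gen_submodule R M F \<and> (\<forall>x\<in>L. s \<odot>\<^bsub>M\<^esub> x \<in> F) \<and> F \<subseteq> L)"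

definition S_noetherian :: "('a, 'c) ring_scheme \<Rightarrow> ('a, 'b) module \<Rightarrow> 'a set \<Rightarrow> bool" where
  "S_noetherian R M S \<longleftrightarrow> (\<forall>L. submodule L R M \<longrightarrow> S_finite R M S L)"

definition mult_subset :: "('a, 'c) ring_scheme \<Rightarrow> 'a set \<Rightarrow> bool" where
  "mult_subset R S \<longleftrightarrow> S \<subseteq> carrier R \<and> \<one>\<^bsub>R\<^esub> \<in> S \<and>
     (\<forall>s\<in>S. \<forall>t\<in>S. s \<otimes>\<^bsub>R\<^esub> t \<in> S)"

definition torsion_free :: "('a, 'c) ring_scheme \<Rightarrow> ('a, 'b) module \<Rightarrow> bool" where
  "torsion_free R M \<longleftrightarrow>
     (\<forall>d\<in>carrier R. \<forall>x\<in>carrier M. d \<odot>\<^bsub>M\<^esub> x = \<zero>\<^bsub>M\<^esub> \<longrightarrow> d = \<zero>\<^bsub>R\<^esub> \<or> x = \<zero>\<^bsub>M\<^esub>)"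

definition mod_colon :: "('a, 'c) ring_scheme \<Rightarrow> ('a, 'b) module \<Rightarrow> 'b set \<Rightarrow> 'a set" where
  "mod_colon R M L = {d \<in> carrier R. \<forall>x\<in>carrier M. d \<odot>\<^bsub>M\<^esub> x \<in> L}"

definition cyclic_sub :: "('a, 'c) ring_scheme \<Rightarrow> ('a, 'b) module \<Rightarrow> 'b \<Rightarrow> 'b set" where
  "cyclic_sub R M a = {d \<odot>\<^bsub>M\<^esub> a | d. d \<in> carrier R}"

definition finite_character :: "('a, 'c) ring_scheme \<Rightarrow> ('a, 'b) module \<Rightarrow> bool" where
  "finite_character R M \<longleftrightarrow>
     (\<forall>a\<in>carrier M. a \<noteq> \<zero>\<^bsub>M\<^esub> \<and> mod_colon R M (cyclic_sub R M a) \<noteq> carrier R \<longrightarrow>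
        finite {P. maximalideal P R \<and> mod_colon R M (cyclic_sub R M a) \<subseteq> P})"

text \<open>Fractions x/t with x \<in> M, t \<in> T; x/t = y/u iff v u x = v t y for some v \<in> T.\<close>
definition loc_eq :: "('a, 'c) ring_scheme \<Rightarrow> ('a, 'b) module \<Rightarrow> 'a set \<Rightarrow> 'b \<times> 'a \<Rightarrow> 'b \<times> 'a \<Rightarrow> bool" where
  "loc_eq R M T p q \<longleftrightarrow>
     fst p \<in> carrier M \<and> snd p \<in> T \<and> fst q \<in> carrier M \<and> snd q \<in> T \<and>
     (\<exists>v\<in>T. (v \<otimes>\<^bsub>R\<^esub> snd q) \<odot>\<^bsub>M\<^esub> fst p = (v \<otimes>\<^bsub>R\<^esub> snd p) \<odot>\<^bsub>M\<^esub> fst q)"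

definition loc_cls :: "('a, 'c) ring_scheme \<Rightarrow> ('a, 'b) module \<Rightarrow> 'a set \<Rightarrow> 'b \<times> 'a \<Rightarrow> ('b \<times> 'a) set" where
  "loc_cls R M T p = {q. loc_eq R M T p q}"

definition loc_rep :: "('b \<times> 'a) set \<Rightarrow> 'b \<times> 'a" where
  "loc_rep A = (SOME p. p \<in> A)"

definition loc_carrier :: "('a, 'c) ring_scheme \<Rightarrow> ('a, 'b) module \<Rightarrow> 'a set \<Rightarrow> ('b \<times> 'a) set set" where
  "loc_carrier R M T = loc_cls R M T ` (carrier M \<times> T)"

definition loc_add :: "('a, 'c) ring_scheme \<Rightarrow> ('a, 'b) module \<Rightarrow> 'a set \<Rightarrow>
    ('b \<times> 'a) set \<Rightarrow> ('b \<times> 'a) set \<Rightarrow> ('b \<times> 'a) set" where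
  "loc_add R M T A B =
     (let (x, t) = loc_rep A; (y, u) = loc_rep B
      in loc_cls R M T ((u \<odot>\<^bsub>M\<^esub> x) \<oplus>\<^bsub>M\<^esub> (t \<odot>\<^bsub>M\<^esub> y), t \<otimes>\<^bsub>R\<^esub> u))"

definition self_module :: "('a, 'c) ring_scheme \<Rightarrow> ('a, 'a) module" where
  "self_module R = \<lparr>carrier = carrier R, mult = mult R, one = one R,
                    zero = zero R, add = add R, smult = mult R\<rparr>"

definition loc_ring :: "('a, 'c) ring_scheme \<Rightarrow> 'a set \<Rightarrow> ('a \<times> 'a) set ring" where
  "loc_ring R T =
     \<lparr>carrier = loc_carrier R (self_module R) T,
      mult = (\<lambda>A B. let (a, t) = loc_rep A; (b, u) = loc_rep B
                     in loc_cls R (self_module R) T (a \<otimes>\<^bsub>R\<^esub> b, t \<otimes>\<^bsub>R\<^esub> u)),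
      one = loc_cls R (self_module R) T (\<one>\<^bsub>R\<^esub>, \<one>\<^bsub>R\<^esub>),
      zero = loc_cls R (self_module R) T (\<zero>\<^bsub>R\<^esub>, \<one>\<^bsub>R\<^esub>),
      add = loc_add R (self_module R) T\<rparr>"

definition loc_module :: "('a, 'c) ring_scheme \<Rightarrow> ('a, 'b) module \<Rightarrow> 'a set \<Rightarrow>
    (('a \<times> 'a) set, ('b \<times> 'a) set) module" where
  "loc_module R M T =
     \<lparr>carrier = loc_carrier R M T,
      mult = (\<lambda>_ _. undefined), one = undefined,
      zero = loc_cls R M T (\<zero>\<^bsub>M\<^esub>, \<one>\<^bsub>R\<^esub>),
      add = loc_add R M T,
      smult = (\<lambda>A X. let (r, t) = loc_rep A; (x, u) = loc_rep X
                      in loc_cls R M T (r \<odot>\<^bsub>M\<^esub> x, t \<otimes>\<^bsub>R\<^esub> u))\<rparr>"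

definition loc_image :: "('a, 'c) ring_scheme \<Rightarrow> 'a set \<Rightarrow> 'a set \<Rightarrow> ('a \<times> 'a) set set" where
  "loc_image R T S = (\<lambda>s. loc_cls R (self_module R) T (s, \<one>\<^bsub>R\<^esub>)) ` S"

definition locally_S_noetherian :: "('a, 'c) ring_scheme \<Rightarrow> ('a, 'b) module \<Rightarrow> 'a set \<Rightarrow> bool" where
  "locally_S_noetherian R M S \<longleftrightarrow>
     (\<forall>P. maximalideal P R \<longrightarrow>
        S_noetherian (loc_ring R (carrier R - P)) (loc_module R M (carrier R - P))
                     (loc_image R (carrier R - P) S))"

end

theory Submission
  imports Defs
begin


lemma sm_zero: "submodule H R M \<Longrightarrow> \<zero>\<^bsub>M\<^esub> \<in> H"
  using subgroup.one_closed[of H "add_monoid M"] submodule.axioms(1) by fastforce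
lemma sm_add: "submodule H R M \<Longrightarrow> x \<in> H \<Longrightarrow> y \<in> H \<Longrightarrow> x \<oplus>\<^bsub>M\<^esub> y \<in> H"
  using subgroup.m_closed[of H "add_monoid M"] submodule.axioms(1) by fastforce
lemma sm_inv: "submodule H R M \<Longrightarrow> x \<in> H \<Longrightarrow> \<ominus>\<^bsub>M\<^esub> x \<in> H"
  unfolding a_inv_def using subgroup.m_inv_closed[of H "add_monoid M"] submodule.axioms(1) by fastforce
lemma sm_smult: "submodule H R M \<Longrightarrow> a \<in> carrier R \<Longrightarrow> x \<in> H \<Longrightarrow> a \<odot>\<^bsub>M\<^esub> x \<in> H"
  using submodule.smult_closed by fastforce
lemma sm_sub: "submodule H R M \<Longrightarrow> H \<subseteq> carrier M"
  using subgroup.subset[of H "add_monoid M"] submodule.axioms(1) by fastforce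

lemma span_least: "submodule N R M \<Longrightarrow> G \<subseteq> N \<Longrightarrow> mod_span R M G \<subseteq> N"
  unfolding mod_span_def by blast

lemma span_incl: "G \<subseteq> mod_span R M G"
  unfolding mod_span_def by blast

lemma span_mem: "(\<And>N. submodule N R M \<Longrightarrow> G \<subseteq> N \<Longrightarrow> x \<in> N) \<Longrightarrow> x \<in> mod_span R M G"
  unfolding mod_span_def by blast

lemma span_elim: "x \<in> mod_span R M G \<Longrightarrow> submodule N R M \<Longrightarrow> G \<subseteq> N \<Longrightarrow> x \<in> N"
  unfolding mod_span_def by blast

lemma span_sub: assumes "module R M" "G \<subseteq> carrier M"
  shows "submodule (mod_span R M G) R M"
proof -
  interpret module R M by fact
  have C: "submodule (carrier M) R M" by (rule carrier_is_submodule)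
  show ?thesis
  proof (rule submoduleI)
    show "mod_span R M G \<subseteq> carrier M" using span_least[OF C assms(2)] .
    show "\<zero>\<^bsub>M\<^esub> \<in> mod_span R M G"
      by (rule span_mem) (rule sm_zero)
    show "\<ominus>\<^bsub>M\<^esub> a \<in> mod_span R M G" if "a \<in> mod_span R M G" for a
      by (rule span_mem) (rule sm_inv, assumption, rule span_elim[OF that])
    show "a \<oplus>\<^bsub>M\<^esub> b \<in> mod_span R M G" if "a \<in> mod_span R M G" "b \<in> mod_span R M G" for a b
      by (rule span_mem) (rule sm_add, assumption, rule span_elim[OF that(1)], assumption+, rule span_elim[OF that(2)])
    show "a \<odot>\<^bsub>M\<^esub> x \<in> mod_span R M G" if "a \<in> carrier R" "x \<in> mod_span R M G" for a x
      by (rule span_mem) (rule sm_smult, assumption, rule that(1), rule span_elim[OF that(2)])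
  qed
qed


lemma krull: assumes R: "cring R" and I: "ideal I R" and one: "\<one>\<^bsub>R\<^esub> \<notin> I"
  shows "\<exists>P. maximalideal P R \<and> I \<subseteq> P"
proof -
  interpret cring R by fact
  define A where "A = {J. ideal J R \<and> I \<subseteq> J \<and> \<one>\<^bsub>R\<^esub> \<notin> J}"
  have sg: "subgroup J (add_monoid R)" if "ideal J R" for J
    using that ideal.axioms(1) additive_subgroup.a_subgroup by blast
  have "\<exists>Mx\<in>A. \<forall>X\<in>A. Mx \<subseteq> X \<longrightarrow> X = Mx"
  proof (rule subset_Zorn_nonempty)
    show "A \<noteq> {}" using I one unfolding A_def by auto
  next
    fix C assume C: "C \<noteq> {}" "subset.chain A C"
    then have CA: "C \<subseteq> A" and ch: "\<And>X Y. X \<in> C \<Longrightarrow> Y \<in> C \<Longrightarrow> X \<subseteq> Y \<or> Y \<subseteq> X"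
      unfolding subset_chain_def by auto
    have id: "ideal J R" if "J \<in> C" for J using that CA unfolding A_def by auto
    have "ideal (\<Union>C) R"
    proof (rule idealI)
      show "ring R" by (rule ring_axioms)
      show "subgroup (\<Union>C) (add_monoid R)"
      proof (rule subgroup.intro)
        show "\<Union>C \<subseteq> carrier (add_monoid R)" using id subgroup.subset[OF sg] by fastforce
        show "x \<otimes>\<^bsub>add_monoid R\<^esub> y \<in> \<Union>C" if xy: "x \<in> \<Union>C" "y \<in> \<Union>C" for x y
        proof -
          obtain X Y where XY: "X \<in> C" "Y \<in> C" "x \<in> X" "y \<in> Y" using xy by auto
          then show ?thesis using ch[OF XY(1,2)] subgroup.m_closed[OF sg[OF id[OF XY(1)]]]
            subgroup.m_closed[OF sg[OF id[OF XY(2)]]] XY by blast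
        qed
        show "\<one>\<^bsub>add_monoid R\<^esub> \<in> \<Union>C" using C(1) subgroup.one_closed[OF sg[OF id]] by blast
        show "inv\<^bsub>add_monoid R\<^esub> x \<in> \<Union>C" if "x \<in> \<Union>C" for x
          using that subgroup.m_inv_closed[OF sg[OF id]] by blast
      qed
      show "x \<otimes>\<^bsub>R\<^esub> a \<in> \<Union>C" if "a \<in> \<Union>C" "x \<in> carrier R" for a x
        using that ideal.I_l_closed[OF id] by blast
      show "a \<otimes>\<^bsub>R\<^esub> x \<in> \<Union>C" if "a \<in> \<Union>C" "x \<in> carrier R" for a x
        using that ideal.I_r_closed[OF id] by blast
    qed
    moreover have "I \<subseteq> \<Union>C" using C(1) CA unfolding A_def by auto
    moreover have "\<one>\<^bsub>R\<^esub> \<notin> \<Union>C" using CA unfolding A_def by auto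
    ultimately show "\<Union>C \<in> A" unfolding A_def by auto
  qed
  then obtain Mx where Mx: "Mx \<in> A" "\<And>X. X \<in> A \<Longrightarrow> Mx \<subseteq> X \<Longrightarrow> X = Mx" by auto
  have "maximalideal Mx R"
  proof (rule maximalidealI)
    show "ideal Mx R" using Mx(1) unfolding A_def by auto
    show "carrier R \<noteq> Mx" using Mx(1) unfolding A_def by auto
    fix J assume J: "ideal J R" "Mx \<subseteq> J" "J \<subseteq> carrier R"
    show "J = Mx \<or> J = carrier R"
    proof (cases "\<one>\<^bsub>R\<^esub> \<in> J")
      case True then show ?thesis using ideal.one_imp_carrier[OF J(1)] by auto
    next
      case False then have "J \<in> A" using J Mx(1) unfolding A_def by auto
      then show ?thesis using Mx(2) J(2) by auto
    qed
  qed
  then show ?thesis using Mx(1) unfolding A_def by auto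
qed


lemma span_mono: assumes "module R M" "Y' \<subseteq> carrier M" "Y \<subseteq> Y'" shows "mod_span R M Y \<subseteq> mod_span R M Y'"
  using span_least[OF span_sub[OF assms(1,2)]] span_incl[of Y' R M] assms(3) by blast

locale locm = module R M for R :: "('a,'c) ring_scheme" (structure) and M :: "('a,'b) module" (structure) +
  fixes T :: "'a set"
  assumes T_sub: "T \<subseteq> carrier R" and T_one: "\<one>\<^bsub>R\<^esub> \<in> T"
    and T_mult: "\<lbrakk>s \<in> T; t \<in> T\<rbrakk> \<Longrightarrow> s \<otimes>\<^bsub>R\<^esub> t \<in> T"
begin

lemma Tc[simp]: "t \<in> T \<Longrightarrow> t \<in> carrier R" using T_sub by auto

abbreviation "leq \<equiv> loc_eq R M T"
abbreviation "cls \<equiv> loc_cls R M T"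

lemma leq_refl: "x \<in> carrier M \<Longrightarrow> t \<in> T \<Longrightarrow> leq (x,t) (x,t)"
  unfolding loc_eq_def using T_one by auto

lemma leq_sym: "leq p q \<Longrightarrow> leq q p"
  unfolding loc_eq_def by metis

lemma leq_trans: assumes "leq p q" "leq q r" shows "leq p r"
proof -
  obtain x1 t1 x2 t2 x3 t3 where P: "p = (x1,t1)" "q = (x2,t2)" "r = (x3,t3)" by (cases p, cases q, cases r) auto
  from assms obtain v w where v: "v \<in> T" "(v \<otimes> t2) \<odot>\<^bsub>M\<^esub> x1 = (v \<otimes> t1) \<odot>\<^bsub>M\<^esub> x2"
    and w: "w \<in> T" "(w \<otimes> t3) \<odot>\<^bsub>M\<^esub> x2 = (w \<otimes> t2) \<odot>\<^bsub>M\<^esub> x3"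
    and c: "x1 \<in> carrier M" "x2 \<in> carrier M" "x3 \<in> carrier M" "t1 \<in> T" "t2 \<in> T" "t3 \<in> T"
    unfolding loc_eq_def P by auto
  have "((v \<otimes> w \<otimes> t2) \<otimes> t3) \<odot>\<^bsub>M\<^esub> x1 = (w \<otimes> t3) \<odot>\<^bsub>M\<^esub> ((v \<otimes> t2) \<odot>\<^bsub>M\<^esub> x1)"
    using v(1) w(1) c by (simp add: smult_assoc1[symmetric] m_ac)
  also have "\<dots> = (w \<otimes> t3) \<odot>\<^bsub>M\<^esub> ((v \<otimes> t1) \<odot>\<^bsub>M\<^esub> x2)" using v by simp
  also have "\<dots> = (v \<otimes> t1) \<odot>\<^bsub>M\<^esub> ((w \<otimes> t3) \<odot>\<^bsub>M\<^esub> x2)"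
    using v(1) w(1) c by (simp add: smult_assoc1[symmetric] m_ac)
  also have "\<dots> = (v \<otimes> t1) \<odot>\<^bsub>M\<^esub> ((w \<otimes> t2) \<odot>\<^bsub>M\<^esub> x3)" using w by simp
  also have "\<dots> = ((v \<otimes> w \<otimes> t2) \<otimes> t1) \<odot>\<^bsub>M\<^esub> x3"
    using v(1) w(1) c by (simp add: smult_assoc1[symmetric] m_ac)
  finally show ?thesis unfolding P loc_eq_def using c v w T_mult by auto
qed

lemma cls_eq_iff: "x \<in> carrier M \<Longrightarrow> t \<in> T \<Longrightarrow> cls (x,t) = cls q \<longleftrightarrow> leq (x,t) q"
proof
  assume "x \<in> carrier M" "t \<in> T" "cls (x,t) = cls q"
  then have "(x,t) \<in> cls q" using leq_refl unfolding loc_cls_def by auto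
  then show "leq (x,t) q" unfolding loc_cls_def using leq_sym by auto
next
  assume "leq (x,t) q"
  then show "cls (x,t) = cls q" unfolding loc_cls_def using leq_sym leq_trans by blast
qed

lemma rep_in: "x \<in> carrier M \<Longrightarrow> t \<in> T \<Longrightarrow> leq (x,t) (loc_rep (cls (x,t)))"
  unfolding loc_rep_def using someI[of "\<lambda>p. p \<in> cls (x,t)" "(x,t)"] leq_refl
  unfolding loc_cls_def by auto

abbreviation "clsR \<equiv> loc_cls R (self_module R) T"

lemma rep_inR: assumes "r \<in> carrier R" "t \<in> T"
  shows "\<exists>r' t' v. loc_rep (clsR (r,t)) = (r',t') \<and> r' \<in> carrier R \<and> t' \<in> T \<and> v \<in> T \<and> (v \<otimes> t') \<otimes> r = (v \<otimes> t) \<otimes> r'"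
proof -
  have "(r,t) \<in> clsR (r,t)" using assms T_one unfolding loc_cls_def loc_eq_def self_module_def by auto
  then have "loc_rep (clsR (r,t)) \<in> clsR (r,t)" unfolding loc_rep_def by (rule someI)
  moreover obtain r' t' where "loc_rep (clsR (r,t)) = (r',t')" by fastforce
  ultimately show ?thesis unfolding loc_cls_def loc_eq_def self_module_def
    by auto
qed

abbreviation "LM \<equiv> loc_module R M T"
abbreviation "LR \<equiv> loc_ring R T"

lemma rep_obtain: assumes "x \<in> carrier M" "t \<in> T"
  obtains x' t' w where "loc_rep (cls (x,t)) = (x',t')" "x' \<in> carrier M" "t' \<in> T" "w \<in> T"
    "(w \<otimes> t') \<odot>\<^bsub>M\<^esub> x = (w \<otimes> t) \<odot>\<^bsub>M\<^esub> x'"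
proof -
  obtain x' t' where e: "loc_rep (cls (x,t)) = (x',t')" by fastforce
  with rep_in[OF assms] show ?thesis using that unfolding loc_eq_def by auto
qed

lemma smult_cls: assumes "r \<in> carrier R" "t \<in> T" "x \<in> carrier M" "u \<in> T"
  shows "clsR (r,t) \<odot>\<^bsub>LM\<^esub> cls (x,u) = cls (r \<odot>\<^bsub>M\<^esub> x, t \<otimes> u)"
proof -
  obtain r' t' v where R1: "loc_rep (clsR (r,t)) = (r',t')" "r' \<in> carrier R" "t' \<in> T" "v \<in> T"
     "(v \<otimes> t') \<otimes> r = (v \<otimes> t) \<otimes> r'" using rep_inR[OF assms(1,2)] by blast
  obtain x' u' w where X1: "loc_rep (cls (x,u)) = (x',u')" "x' \<in> carrier M" "u' \<in> T" "w \<in> T"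
    "(w \<otimes> u') \<odot>\<^bsub>M\<^esub> x = (w \<otimes> u) \<odot>\<^bsub>M\<^esub> x'" using rep_obtain[OF assms(3,4)] by blast
  have "((v \<otimes> w) \<otimes> (t' \<otimes> u')) \<odot>\<^bsub>M\<^esub> (r \<odot>\<^bsub>M\<^esub> x) = ((v \<otimes> t') \<otimes> r) \<odot>\<^bsub>M\<^esub> ((w \<otimes> u') \<odot>\<^bsub>M\<^esub> x)"
    using assms R1(2-4) X1(2-4) by (simp add: smult_assoc1[symmetric] m_ac)
  also have "\<dots> = ((v \<otimes> t) \<otimes> r') \<odot>\<^bsub>M\<^esub> ((w \<otimes> u) \<odot>\<^bsub>M\<^esub> x')" using R1(5) X1(5) by simp
  also have "\<dots> = ((v \<otimes> w) \<otimes> (t \<otimes> u)) \<odot>\<^bsub>M\<^esub> (r' \<odot>\<^bsub>M\<^esub> x')"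
    using assms R1(2-4) X1(2-4) by (simp add: smult_assoc1[symmetric] m_ac)
  finally have "leq (r \<odot>\<^bsub>M\<^esub> x, t \<otimes> u) (r' \<odot>\<^bsub>M\<^esub> x', t' \<otimes> u')"
    unfolding loc_eq_def using assms R1(2-4) X1(2-4) T_mult by auto
  then have "cls (r \<odot>\<^bsub>M\<^esub> x, t \<otimes> u) = cls (r' \<odot>\<^bsub>M\<^esub> x', t' \<otimes> u')"
    using cls_eq_iff assms T_mult by simp
  then show ?thesis unfolding loc_module_def using R1(1) X1(1) by simp
qed

lemma add_cls: assumes "x \<in> carrier M" "t \<in> T" "y \<in> carrier M" "u \<in> T"
  shows "cls (x,t) \<oplus>\<^bsub>LM\<^esub> cls (y,u) = cls ((u \<odot>\<^bsub>M\<^esub> x) \<oplus>\<^bsub>M\<^esub> (t \<odot>\<^bsub>M\<^esub> y), t \<otimes> u)"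
proof -
  obtain x' t' a where X1: "loc_rep (cls (x,t)) = (x',t')" "x' \<in> carrier M" "t' \<in> T" "a \<in> T"
    "(a \<otimes> t') \<odot>\<^bsub>M\<^esub> x = (a \<otimes> t) \<odot>\<^bsub>M\<^esub> x'" using rep_obtain[OF assms(1,2)] by blast
  obtain y' u' b where Y1: "loc_rep (cls (y,u)) = (y',u')" "y' \<in> carrier M" "u' \<in> T" "b \<in> T"
    "(b \<otimes> u') \<odot>\<^bsub>M\<^esub> y = (b \<otimes> u) \<odot>\<^bsub>M\<^esub> y'" using rep_obtain[OF assms(3,4)] by blast
  note C = assms X1(2-4) Y1(2-4)
  have e1: "((a \<otimes> b) \<otimes> (t' \<otimes> u')) \<odot>\<^bsub>M\<^esub> (u \<odot>\<^bsub>M\<^esub> x) = ((a \<otimes> b) \<otimes> (t \<otimes> u)) \<odot>\<^bsub>M\<^esub> (u' \<odot>\<^bsub>M\<^esub> x')"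
  proof -
    have "((a \<otimes> b) \<otimes> (t' \<otimes> u')) \<odot>\<^bsub>M\<^esub> (u \<odot>\<^bsub>M\<^esub> x) = (b \<otimes> u' \<otimes> u) \<odot>\<^bsub>M\<^esub> ((a \<otimes> t') \<odot>\<^bsub>M\<^esub> x)"
      using C by (simp add: smult_assoc1[symmetric] m_ac)
    also have "\<dots> = (b \<otimes> u' \<otimes> u) \<odot>\<^bsub>M\<^esub> ((a \<otimes> t) \<odot>\<^bsub>M\<^esub> x')" using X1(5) by simp
    also have "\<dots> = ((a \<otimes> b) \<otimes> (t \<otimes> u)) \<odot>\<^bsub>M\<^esub> (u' \<odot>\<^bsub>M\<^esub> x')"
      using C by (simp add: smult_assoc1[symmetric] m_ac)
    finally show ?thesis .
  qed
  have e2: "((a \<otimes> b) \<otimes> (t' \<otimes> u')) \<odot>\<^bsub>M\<^esub> (t \<odot>\<^bsub>M\<^esub> y) = ((a \<otimes> b) \<otimes> (t \<otimes> u)) \<odot>\<^bsub>M\<^esub> (t' \<odot>\<^bsub>M\<^esub> y')"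
  proof -
    have "((a \<otimes> b) \<otimes> (t' \<otimes> u')) \<odot>\<^bsub>M\<^esub> (t \<odot>\<^bsub>M\<^esub> y) = (a \<otimes> t' \<otimes> t) \<odot>\<^bsub>M\<^esub> ((b \<otimes> u') \<odot>\<^bsub>M\<^esub> y)"
      using C by (simp add: smult_assoc1[symmetric] m_ac)
    also have "\<dots> = (a \<otimes> t' \<otimes> t) \<odot>\<^bsub>M\<^esub> ((b \<otimes> u) \<odot>\<^bsub>M\<^esub> y')" using Y1(5) by simp
    also have "\<dots> = ((a \<otimes> b) \<otimes> (t \<otimes> u)) \<odot>\<^bsub>M\<^esub> (t' \<odot>\<^bsub>M\<^esub> y')"
      using C by (simp add: smult_assoc1[symmetric] m_ac)
    finally show ?thesis .
  qed
  have "leq ((u \<odot>\<^bsub>M\<^esub> x) \<oplus>\<^bsub>M\<^esub> (t \<odot>\<^bsub>M\<^esub> y), t \<otimes> u) ((u' \<odot>\<^bsub>M\<^esub> x') \<oplus>\<^bsub>M\<^esub> (t' \<odot>\<^bsub>M\<^esub> y'), t' \<otimes> u')"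
    unfolding loc_eq_def using C T_mult e1 e2 by (auto simp: smult_r_distr intro!: bexI[of _ "a \<otimes> b"])
  then have "cls ((u \<odot>\<^bsub>M\<^esub> x) \<oplus>\<^bsub>M\<^esub> (t \<odot>\<^bsub>M\<^esub> y), t \<otimes> u) = cls ((u' \<odot>\<^bsub>M\<^esub> x') \<oplus>\<^bsub>M\<^esub> (t' \<odot>\<^bsub>M\<^esub> y'), t' \<otimes> u')"
    using cls_eq_iff C T_mult by simp
  then show ?thesis unfolding loc_module_def loc_add_def using X1(1) Y1(1) by simp
qed

lemma carrier_LM: "carrier LM = cls ` (carrier M \<times> T)"
  unfolding loc_module_def loc_carrier_def by simp

lemma carrier_LR: "carrier LR = clsR ` (carrier R \<times> T)"
  unfolding loc_ring_def loc_carrier_def self_module_def by simp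

lemma zero_LM: "\<zero>\<^bsub>LM\<^esub> = cls (\<zero>\<^bsub>M\<^esub>, \<one>)"
  unfolding loc_module_def by simp

lemma cls_zero: "t \<in> T \<Longrightarrow> cls (\<zero>\<^bsub>M\<^esub>, t) = \<zero>\<^bsub>LM\<^esub>"
proof -
  assume t: "t \<in> T"
  have "leq (\<zero>\<^bsub>M\<^esub>, t) (\<zero>\<^bsub>M\<^esub>, \<one>)"
    unfolding loc_eq_def using T_one t by (auto intro!: bexI[of _ "\<one>"])
  then show ?thesis unfolding zero_LM using t cls_eq_iff by simp
qed

lemma ainv_cls: assumes "x \<in> carrier M" "t \<in> T"
  shows "\<ominus>\<^bsub>LM\<^esub> cls (x,t) = cls (\<ominus>\<^bsub>M\<^esub> x, t)"
proof -
  have tt: "t \<otimes> t \<in> T" using assms T_mult by auto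
  have s1: "cls (x,t) \<oplus>\<^bsub>LM\<^esub> cls (\<ominus>\<^bsub>M\<^esub> x, t) = \<zero>\<^bsub>LM\<^esub>"
  proof -
    have "cls (x,t) \<oplus>\<^bsub>LM\<^esub> cls (\<ominus>\<^bsub>M\<^esub> x, t) = cls ((t \<odot>\<^bsub>M\<^esub> x) \<oplus>\<^bsub>M\<^esub> (t \<odot>\<^bsub>M\<^esub> (\<ominus>\<^bsub>M\<^esub> x)), t \<otimes> t)"
      by (rule add_cls) (use assms in auto)
    also have "(t \<odot>\<^bsub>M\<^esub> x) \<oplus>\<^bsub>M\<^esub> (t \<odot>\<^bsub>M\<^esub> (\<ominus>\<^bsub>M\<^esub> x)) = \<zero>\<^bsub>M\<^esub>"
      using assms by (simp add: smult_r_minus M.r_neg)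
    finally show ?thesis using cls_zero tt by simp
  qed
  have s2: "cls (\<ominus>\<^bsub>M\<^esub> x, t) \<oplus>\<^bsub>LM\<^esub> cls (x,t) = \<zero>\<^bsub>LM\<^esub>"
  proof -
    have "cls (\<ominus>\<^bsub>M\<^esub> x, t) \<oplus>\<^bsub>LM\<^esub> cls (x,t) = cls ((t \<odot>\<^bsub>M\<^esub> (\<ominus>\<^bsub>M\<^esub> x)) \<oplus>\<^bsub>M\<^esub> (t \<odot>\<^bsub>M\<^esub> x), t \<otimes> t)"
      by (rule add_cls) (use assms in auto)
    also have "(t \<odot>\<^bsub>M\<^esub> (\<ominus>\<^bsub>M\<^esub> x)) \<oplus>\<^bsub>M\<^esub> (t \<odot>\<^bsub>M\<^esub> x) = \<zero>\<^bsub>M\<^esub>"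
      using assms by (simp add: smult_r_minus M.l_neg)
    finally show ?thesis using cls_zero tt by simp
  qed
  have c: "cls (\<ominus>\<^bsub>M\<^esub> x, t) \<in> carrier LM" using assms carrier_LM by auto
  have u: "z = cls (\<ominus>\<^bsub>M\<^esub> x, t)" if z: "z \<in> carrier LM" "cls (x,t) \<oplus>\<^bsub>LM\<^esub> z = \<zero>\<^bsub>LM\<^esub>" for z
  proof -
    obtain w u where wu: "z = cls (w,u)" "w \<in> carrier M" "u \<in> T" using z(1) carrier_LM by auto
    have "cls ((u \<odot>\<^bsub>M\<^esub> x) \<oplus>\<^bsub>M\<^esub> (t \<odot>\<^bsub>M\<^esub> w), t \<otimes> u) = cls (\<zero>\<^bsub>M\<^esub>, \<one>)"
      using z(2) wu assms by (simp add: add_cls zero_LM)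
    then have "leq ((u \<odot>\<^bsub>M\<^esub> x) \<oplus>\<^bsub>M\<^esub> (t \<odot>\<^bsub>M\<^esub> w), t \<otimes> u) (\<zero>\<^bsub>M\<^esub>, \<one>)"
      using cls_eq_iff wu assms T_mult by auto
    then obtain v where v: "v \<in> T" "(v \<otimes> \<one>) \<odot>\<^bsub>M\<^esub> ((u \<odot>\<^bsub>M\<^esub> x) \<oplus>\<^bsub>M\<^esub> (t \<odot>\<^bsub>M\<^esub> w)) = (v \<otimes> (t \<otimes> u)) \<odot>\<^bsub>M\<^esub> \<zero>\<^bsub>M\<^esub>"
      unfolding loc_eq_def by auto
    then have "((v \<otimes> u) \<odot>\<^bsub>M\<^esub> x) \<oplus>\<^bsub>M\<^esub> ((v \<otimes> t) \<odot>\<^bsub>M\<^esub> w) = \<zero>\<^bsub>M\<^esub>"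
      using assms wu by (simp add: smult_r_distr smult_assoc1)
    then have "\<ominus>\<^bsub>M\<^esub> ((v \<otimes> u) \<odot>\<^bsub>M\<^esub> x) = (v \<otimes> t) \<odot>\<^bsub>M\<^esub> w"
      using M.minus_equality[of "(v \<otimes> t) \<odot>\<^bsub>M\<^esub> w" "(v \<otimes> u) \<odot>\<^bsub>M\<^esub> x"] assms wu v(1)
      by (simp add: M.a_comm)
    then have "leq (w,u) (\<ominus>\<^bsub>M\<^esub> x, t)"
      unfolding loc_eq_def using assms wu v(1) by (auto simp: smult_r_minus intro!: bexI[of _ v])
    then show ?thesis using wu cls_eq_iff by simp
  qed
  show ?thesis unfolding a_inv_def[of LM] m_inv_def
  proof (rule the_equality, goal_cases)
    case 1 then show ?case using s1 s2 c by simp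
  next
    case (2 z) then show ?case using u by simp
  qed
qed

lemma loc_sub: assumes "submodule N R M"
  shows "submodule {cls (x,t) | x t. x \<in> N \<and> t \<in> T} LR LM"
proof -
  interpret N: submodule N R M by fact
  have NC: "x \<in> N \<Longrightarrow> x \<in> carrier M" for x using N.subset by auto
  show ?thesis
  proof (intro submodule.intro subgroup.intro submodule_axioms.intro)
    show "{cls (x,t) | x t. x \<in> N \<and> t \<in> T} \<subseteq> carrier (add_monoid LM)"
      using carrier_LM NC by auto
  next
    fix X Y assume "X \<in> {cls (x,t) | x t. x \<in> N \<and> t \<in> T}" "Y \<in> {cls (x,t) | x t. x \<in> N \<and> t \<in> T}"
    then obtain x t y u where "X = cls (x,t)" "Y = cls (y,u)" "x \<in> N" "y \<in> N" "t \<in> T" "u \<in> T" by auto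
    moreover have "(u \<odot>\<^bsub>M\<^esub> x) \<oplus>\<^bsub>M\<^esub> (t \<odot>\<^bsub>M\<^esub> y) \<in> N" "t \<otimes> u \<in> T"
      using calculation T_mult N.m_closed[of "u \<odot>\<^bsub>M\<^esub> x" "t \<odot>\<^bsub>M\<^esub> y"] by auto
    ultimately show "X \<otimes>\<^bsub>add_monoid LM\<^esub> Y \<in> {cls (x,t) | x t. x \<in> N \<and> t \<in> T}"
      using NC add_cls by auto
  next
    show "\<one>\<^bsub>add_monoid LM\<^esub> \<in> {cls (x,t) | x t. x \<in> N \<and> t \<in> T}"
      using zero_LM T_one N.one_closed by auto
  next
    fix X assume "X \<in> {cls (x,t) | x t. x \<in> N \<and> t \<in> T}"
    then obtain x t where "X = cls (x,t)" "x \<in> N" "t \<in> T" by auto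
    then show "inv\<^bsub>add_monoid LM\<^esub> X \<in> {cls (x,t) | x t. x \<in> N \<and> t \<in> T}"
      using NC ainv_cls[of x t, unfolded a_inv_def[of LM]] N.m_inv_closed[of x, folded a_inv_def] by auto
  next
    fix A X assume "A \<in> carrier LR" "X \<in> {cls (x,t) | x t. x \<in> N \<and> t \<in> T}"
    then obtain x t r u where "X = cls (x,t)" "x \<in> N" "t \<in> T" "A = clsR (r,u)" "r \<in> carrier R" "u \<in> T"
      using carrier_LR by auto
    moreover have "r \<odot>\<^bsub>M\<^esub> x \<in> N" "u \<otimes> t \<in> T" using calculation T_mult by auto
    ultimately show "A \<odot>\<^bsub>LM\<^esub> X \<in> {cls (x,t) | x t. x \<in> N \<and> t \<in> T}"
      using NC smult_cls by auto
  qed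
qed

lemma cls_scale: "x \<in> carrier M \<Longrightarrow> t \<in> T \<Longrightarrow> u \<in> T \<Longrightarrow> cls (u \<odot>\<^bsub>M\<^esub> x, u \<otimes> t) = cls (x, t)"
  by (subst cls_eq_iff) (auto simp: loc_eq_def T_mult smult_assoc1[symmetric] m_ac intro!: bexI[of _ "\<one>"] T_one)

lemma part1: assumes SN: "S_noetherian R M S" and Sc: "S \<subseteq> carrier R"
  shows "S_noetherian LR LM (loc_image R T S)"
  unfolding S_noetherian_def
proof (intro allI impI)
  fix L assume subL: "submodule L LR LM"
  define N where "N = {x \<in> carrier M. cls (x, \<one>) \<in> L}"
  have subN: "submodule N R M"
  proof (rule submoduleI)
    show "N \<subseteq> carrier M" unfolding N_def by auto
    show "\<zero>\<^bsub>M\<^esub> \<in> N" unfolding N_def using sm_zero[OF subL] zero_LM by auto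
    show "\<ominus>\<^bsub>M\<^esub> a \<in> N" if "a \<in> N" for a
      using that sm_inv[OF subL, of "cls (a, \<one>)"] ainv_cls[of a "\<one>"] T_one unfolding N_def by auto
    show "a \<oplus>\<^bsub>M\<^esub> b \<in> N" if "a \<in> N" "b \<in> N" for a b
      using that sm_add[OF subL, of "cls (a, \<one>)" "cls (b, \<one>)"] add_cls[of a "\<one>" b "\<one>"] T_one unfolding N_def by auto
    show "a \<odot>\<^bsub>M\<^esub> x \<in> N" if "a \<in> carrier R" "x \<in> N" for a x
    proof -
      have "clsR (a, \<one>) \<in> carrier LR" using that T_one carrier_LR by auto
      then show ?thesis
      using that sm_smult[OF subL, of "clsR (a, \<one>)" "cls (x, \<one>)"] smult_cls[of a "\<one>" x "\<one>"] T_one unfolding N_def by auto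
    qed
  qed
  obtain s F where s: "s \<in> S" and fg: "fin_gen_submodule R M F" and sF: "\<forall>x\<in>N. s \<odot>\<^bsub>M\<^esub> x \<in> F" and FN: "F \<subseteq> N"
    using SN subN unfolding S_noetherian_def S_finite_def by blast
  obtain G where G: "finite G" "G \<subseteq> carrier M" "F = mod_span R M G" using fg unfolding fin_gen_submodule_def by auto
  have sc: "s \<in> carrier R" using s Sc by auto
  define G' where "G' = (\<lambda>g. cls (g, \<one>)) ` G"
  define F' where "F' = mod_span LR LM G'"
  have "fin_gen_submodule LR LM F'" unfolding fin_gen_submodule_def F'_def
    using G carrier_LM T_one by (intro exI[of _ G']) (auto simp: G'_def)
  moreover have "F' \<subseteq> L" unfolding F'_def
  proof (rule span_least[OF subL])
    show "G' \<subseteq> L" unfolding G'_def using span_incl[of G R M] G(3) FN unfolding N_def by auto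
  qed
  moreover have "\<forall>X\<in>L. clsR (s, \<one>) \<odot>\<^bsub>LM\<^esub> X \<in> F'"
  proof
    fix X assume X: "X \<in> L"
    then obtain x t where xt: "X = cls (x,t)" "x \<in> carrier M" "t \<in> T"
      using sm_sub[OF subL] carrier_LM by auto
    have "clsR (t, \<one>) \<odot>\<^bsub>LM\<^esub> X \<in> L" using sm_smult[OF subL _ X, of "clsR (t, \<one>)"] carrier_LR xt T_one by auto
    then have "cls (x, \<one>) \<in> L" using xt smult_cls[of t "\<one>" x t] cls_scale[of x "\<one>" t] T_one by (simp add: m_comm)
    then have "x \<in> N" unfolding N_def using xt by auto
    then have sxF: "s \<odot>\<^bsub>M\<^esub> x \<in> F" using sF by auto
    have eq: "clsR (s, \<one>) \<odot>\<^bsub>LM\<^esub> X = cls (s \<odot>\<^bsub>M\<^esub> x, t)" using xt smult_cls[of s "\<one>" x t] sc T_one by simp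
    show "clsR (s, \<one>) \<odot>\<^bsub>LM\<^esub> X \<in> F'" unfolding eq F'_def mod_span_def
    proof (intro InterI, clarify)
      fix N' assume subN': "submodule N' LR LM" and GN': "G' \<subseteq> N'"
      define P where "P = {y \<in> carrier M. \<forall>u\<in>T. cls (y,u) \<in> N'}"
      have subP: "submodule P R M"
      proof (rule submoduleI)
        show "P \<subseteq> carrier M" unfolding P_def by auto
        show "\<zero>\<^bsub>M\<^esub> \<in> P" unfolding P_def using sm_zero[OF subN'] cls_zero by auto
        show "\<ominus>\<^bsub>M\<^esub> a \<in> P" if "a \<in> P" for a
        proof -
          have ac: "a \<in> carrier M" and h: "\<And>u. u \<in> T \<Longrightarrow> cls (a,u) \<in> N'" using that unfolding P_def by auto
          have "cls (\<ominus>\<^bsub>M\<^esub> a, u) \<in> N'" if u: "u \<in> T" for u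
          proof -
            have "\<ominus>\<^bsub>LM\<^esub> cls (a,u) \<in> N'" by (rule sm_inv[OF subN' h[OF u]])
            then show ?thesis using ainv_cls[OF ac u] by simp
          qed
          then show ?thesis using ac unfolding P_def by auto
        qed
        show "a \<oplus>\<^bsub>M\<^esub> b \<in> P" if "a \<in> P" "b \<in> P" for a b
        proof -
          have "cls (a \<oplus>\<^bsub>M\<^esub> b, u) \<in> N'" if u: "u \<in> T" for u
          proof -
            have mem: "cls (a,u) \<oplus>\<^bsub>LM\<^esub> cls (b,u) \<in> N'"
              by (rule sm_add[OF subN']) (use \<open>a \<in> P\<close> \<open>b \<in> P\<close> u in \<open>auto simp: P_def\<close>)
            have "cls (a,u) \<oplus>\<^bsub>LM\<^esub> cls (b,u) = cls ((u \<odot>\<^bsub>M\<^esub> a) \<oplus>\<^bsub>M\<^esub> (u \<odot>\<^bsub>M\<^esub> b), u \<otimes> u)"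
              using \<open>a \<in> P\<close> \<open>b \<in> P\<close> u add_cls unfolding P_def by auto
            also have "\<dots> = cls (u \<odot>\<^bsub>M\<^esub> (a \<oplus>\<^bsub>M\<^esub> b), u \<otimes> u)"
              using \<open>a \<in> P\<close> \<open>b \<in> P\<close> u smult_r_distr unfolding P_def by auto
            also have "\<dots> = cls (a \<oplus>\<^bsub>M\<^esub> b, u)"
              using \<open>a \<in> P\<close> \<open>b \<in> P\<close> u cls_scale unfolding P_def by auto
            finally show ?thesis using mem by simp
          qed
          then show ?thesis using that unfolding P_def by auto
        qed
        show "a \<odot>\<^bsub>M\<^esub> y \<in> P" if "a \<in> carrier R" "y \<in> P" for a y
        proof -
          have "cls (a \<odot>\<^bsub>M\<^esub> y, u) \<in> N'" if u: "u \<in> T" for u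
          proof -
            have "clsR (a, \<one>) \<in> carrier LR" using \<open>a \<in> carrier R\<close> T_one carrier_LR by auto
            then have "clsR (a, \<one>) \<odot>\<^bsub>LM\<^esub> cls (y,u) \<in> N'" using sm_smult[OF subN'] \<open>y \<in> P\<close> u unfolding P_def by auto
            then show ?thesis using smult_cls[of a "\<one>" y u] \<open>a \<in> carrier R\<close> \<open>y \<in> P\<close> u T_one unfolding P_def by auto
          qed
          then show ?thesis using that unfolding P_def by auto
        qed
      qed
      have "G \<subseteq> P"
      proof
        fix g assume g: "g \<in> G"
        have gc: "g \<in> carrier M" using g G(2) by auto
        have "cls (g, u) \<in> N'" if u: "u \<in> T" for u
        proof -
          have "clsR (\<one>, u) \<in> carrier LR" using u carrier_LR by auto
          moreover have "cls (g, \<one>) \<in> N'" using GN' g unfolding G'_def by auto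
          ultimately have "clsR (\<one>, u) \<odot>\<^bsub>LM\<^esub> cls (g, \<one>) \<in> N'" using sm_smult[OF subN'] by auto
          then show ?thesis using smult_cls[of "\<one>" u g "\<one>"] u gc T_one by simp
        qed
        then show "g \<in> P" unfolding P_def using gc by auto
      qed
      then have "F \<subseteq> P" using span_least[OF subP] G(3) by auto
      then show "cls (s \<odot>\<^bsub>M\<^esub> x, t) \<in> N'" using sxF xt unfolding P_def by auto
    qed
  qed
  moreover have "clsR (s, \<one>) \<in> loc_image R T S" unfolding loc_image_def using s by auto
  ultimately show "S_finite LR LM (loc_image R T S) L" unfolding S_finite_def by blast
qed

lemma part2_local: assumes SN: "S_noetherian LR LM (loc_image R T S)" and subN: "submodule N R M"
  and Sc: "S \<subseteq> carrier R"
  shows "\<exists>s\<in>S. \<exists>Y. finite Y \<and> Y \<subseteq> N \<and> (\<forall>x\<in>N. \<exists>t\<in>T. (t \<otimes> s) \<odot>\<^bsub>M\<^esub> x \<in> mod_span R M Y)"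
proof -
  define L where "L = {cls (x,t) | x t. x \<in> N \<and> t \<in> T}"
  have subL: "submodule L LR LM" unfolding L_def by (rule loc_sub[OF subN])
  have NC: "N \<subseteq> carrier M" by (rule sm_sub[OF subN])
  obtain s' F' where s': "s' \<in> loc_image R T S" and fg: "fin_gen_submodule LR LM F'"
    and sF: "\<forall>X\<in>L. s' \<odot>\<^bsub>LM\<^esub> X \<in> F'" and FL: "F' \<subseteq> L"
    using SN subL unfolding S_noetherian_def S_finite_def by blast
  obtain s where s: "s \<in> S" "s' = clsR (s, \<one>)" using s' unfolding loc_image_def by auto
  have sc: "s \<in> carrier R" using s Sc by auto
  obtain G' where G': "finite G'" "G' \<subseteq> carrier LM" "F' = mod_span LR LM G'"
    using fg unfolding fin_gen_submodule_def by auto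
  have GL: "G' \<subseteq> L" using span_incl[of G' LR LM] G'(3) FL by auto
  define f where "f g = (SOME p. p \<in> N \<times> T \<and> g = cls p)" for g
  have f: "f g \<in> N \<times> T \<and> g = cls (f g)" if "g \<in> G'" for g
  proof -
    from that GL obtain x t where "g = cls (x,t)" "x \<in> N" "t \<in> T" unfolding L_def by auto
    then have "\<exists>p. p \<in> N \<times> T \<and> g = cls p" by auto
    then show ?thesis unfolding f_def by (rule someI_ex)
  qed
  define Y where "Y = fst ` f ` G'"
  have fY: "finite Y" unfolding Y_def using G'(1) by auto
  have YN: "Y \<subseteq> N" unfolding Y_def using f by force
  have subSY: "submodule (mod_span R M Y) R M" using span_sub[of R M Y] YN NC
    by (simp add: module_axioms)
  define Q where "Q = {cls (x,t) | x t. x \<in> mod_span R M Y \<and> t \<in> T}"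
  have subQ: "submodule Q LR LM" unfolding Q_def by (rule loc_sub[OF subSY])
  have "G' \<subseteq> Q"
  proof
    fix g assume g: "g \<in> G'"
    then have "fst (f g) \<in> mod_span R M Y" using span_incl[of Y R M] unfolding Y_def by auto
    moreover have "snd (f g) \<in> T" "g = cls (fst (f g), snd (f g))" using f[OF g] by auto
    ultimately show "g \<in> Q" unfolding Q_def by blast
  qed
  then have FQ: "F' \<subseteq> Q" using span_least[OF subQ] G'(3) by auto
  have "\<forall>x\<in>N. \<exists>t\<in>T. (t \<otimes> s) \<odot>\<^bsub>M\<^esub> x \<in> mod_span R M Y"
  proof
    fix x assume x: "x \<in> N"
    have xc: "x \<in> carrier M" using x NC by auto
    have "cls (x, \<one>) \<in> L" unfolding L_def using x T_one by auto
    then have "s' \<odot>\<^bsub>LM\<^esub> cls (x, \<one>) \<in> Q" using sF FQ by auto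
    moreover have "s' \<odot>\<^bsub>LM\<^esub> cls (x, \<one>) = cls (s \<odot>\<^bsub>M\<^esub> x, \<one>)"
      using s(2) smult_cls[of s "\<one>" x "\<one>"] sc xc T_one by simp
    ultimately obtain y u where yu: "cls (s \<odot>\<^bsub>M\<^esub> x, \<one>) = cls (y,u)" "y \<in> mod_span R M Y" "u \<in> T"
      unfolding Q_def by auto
    then have "leq (s \<odot>\<^bsub>M\<^esub> x, \<one>) (y,u)" using cls_eq_iff sc xc T_one by simp
    then obtain v where v: "v \<in> T" "(v \<otimes> u) \<odot>\<^bsub>M\<^esub> (s \<odot>\<^bsub>M\<^esub> x) = (v \<otimes> \<one>) \<odot>\<^bsub>M\<^esub> y"
      unfolding loc_eq_def by auto
    have yc: "y \<in> carrier M" using yu(2) sm_sub[OF subSY] by auto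
    have "((v \<otimes> u) \<otimes> s) \<odot>\<^bsub>M\<^esub> x = v \<odot>\<^bsub>M\<^esub> y"
      using v yu(3) sc xc yc by (simp add: smult_assoc1)
    moreover have "v \<odot>\<^bsub>M\<^esub> y \<in> mod_span R M Y" using sm_smult[OF subSY] v(1) yu(2) by auto
    moreover have "v \<otimes> u \<in> T" using v(1) yu(3) T_mult by auto
    ultimately show "\<exists>t\<in>T. (t \<otimes> s) \<odot>\<^bsub>M\<^esub> x \<in> mod_span R M Y" by metis
  qed
  then show ?thesis using s(1) fY YN by blast
qed

end

theorem proposition2p4:
  fixes D :: "'a ring" and M :: "('a, 'b) module" and S :: "'a set"
  assumes "domain D"
    and "module D M"
    and "mult_subset D S"
    and "torsion_free D M"
  shows "(S_noetherian D M S \<longrightarrow> locally_S_noetherian D M S)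
       \<and> (locally_S_noetherian D M S \<and> finite_character D M \<longrightarrow> S_noetherian D M S)"
proof -
  interpret module D M by fact
  have Sc: "S \<subseteq> carrier D" and S1: "\<one>\<^bsub>D\<^esub> \<in> S" and Sm: "\<And>s t. s \<in> S \<Longrightarrow> t \<in> S \<Longrightarrow> s \<otimes>\<^bsub>D\<^esub> t \<in> S"
    using assms(3) unfolding mult_subset_def by auto
  have loc: "locm D M (carrier D - P)" if P: "maximalideal P D" for P
  proof (intro locm.intro locm_axioms.intro)
    show "module D M" by fact
    show "carrier D - P \<subseteq> carrier D" by auto
    show "\<one>\<^bsub>D\<^esub> \<in> carrier D - P"
      using ideal.one_imp_carrier[OF maximalideal.axioms(1)[OF P]] maximalideal.I_notcarr[OF P] by auto
    fix s t assume st: "s \<in> carrier D - P" "t \<in> carrier D - P"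
    have "primeideal P D" using maximalideal_prime[OF P] .
    then show "s \<otimes>\<^bsub>D\<^esub> t \<in> carrier D - P" using st primeideal.I_prime by fastforce
  qed
  have part1: "S_noetherian D M S \<longrightarrow> locally_S_noetherian D M S"
    unfolding locally_S_noetherian_def using locm.part1[OF loc _ Sc] by blast
  have part2: "S_noetherian D M S" if LSN: "locally_S_noetherian D M S" and FC: "finite_character D M"
    unfolding S_noetherian_def
  proof (intro allI impI)
    fix N assume subN: "submodule N D M"
    have NC: "N \<subseteq> carrier M" by (rule sm_sub[OF subN])
    show "S_finite D M S N"
    proof (cases "N \<subseteq> {\<zero>\<^bsub>M\<^esub>}")
      case True
      have "fin_gen_submodule D M (mod_span D M {})" unfolding fin_gen_submodule_def by auto
      moreover have "\<forall>x\<in>N. \<one>\<^bsub>D\<^esub> \<odot>\<^bsub>M\<^esub> x \<in> mod_span D M {}"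
        using True sm_zero[OF span_sub[OF assms(2), of "{}"]] by auto
      moreover have "mod_span D M {} \<subseteq> N" using span_least[OF subN] by auto
      ultimately show ?thesis unfolding S_finite_def using S1 by blast
    next
      case False
      then obtain a where a: "a \<in> N" "a \<noteq> \<zero>\<^bsub>M\<^esub>" by auto
      have ac: "a \<in> carrier M" using a NC by auto
      define Ia where "Ia = mod_colon D M (cyclic_sub D M a)"
      define MaxA where "MaxA = {P. maximalideal P D \<and> Ia \<subseteq> P}"
      have fin: "finite MaxA"
      proof (cases "Ia = carrier D")
        case True
        have "MaxA = {}"
        proof (rule ccontr)
          assume "MaxA \<noteq> {}"
          then obtain P where P: "maximalideal P D" "carrier D \<subseteq> P" unfolding MaxA_def True by auto
          then have "P = carrier D" using ideal.Icarr[OF maximalideal.axioms(1)[OF P(1)]] by auto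
          then show False using maximalideal.I_notcarr[OF P(1)] by auto
        qed
        then show ?thesis by simp
      next
        case False
        then show ?thesis using FC ac a(2) unfolding finite_character_def MaxA_def Ia_def by auto
      qed
      have claim: "A \<subseteq> MaxA \<longrightarrow> (\<exists>s\<in>S. \<exists>Y. finite Y \<and> Y \<subseteq> N \<and>
          (\<forall>P\<in>A. \<forall>x\<in>N. \<exists>t\<in>carrier D - P. (t \<otimes>\<^bsub>D\<^esub> s) \<odot>\<^bsub>M\<^esub> x \<in> mod_span D M Y))"
        if "finite A" for A
        using that
      proof (induction rule: finite_induct)
        case empty
        then show ?case using S1 by auto
      next
        case (insert P A)
        show ?case
        proof
          assume sub: "insert P A \<subseteq> MaxA"
          then obtain s Y where sY: "s \<in> S" "finite Y" "Y \<subseteq> N"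
            "\<forall>Q\<in>A. \<forall>x\<in>N. \<exists>t\<in>carrier D - Q. (t \<otimes>\<^bsub>D\<^esub> s) \<odot>\<^bsub>M\<^esub> x \<in> mod_span D M Y"
            using insert.IH by auto
          have Pm: "maximalideal P D" using sub unfolding MaxA_def by auto
          obtain s2 Y2 where s2: "s2 \<in> S" "finite Y2" "Y2 \<subseteq> N"
            "\<forall>x\<in>N. \<exists>t\<in>carrier D - P. (t \<otimes>\<^bsub>D\<^esub> s2) \<odot>\<^bsub>M\<^esub> x \<in> mod_span D M Y2"
            using locm.part2_local[OF loc[OF Pm] _ subN Sc] LSN Pm unfolding locally_S_noetherian_def by blast
          have sc: "s \<in> carrier D" "s2 \<in> carrier D" using sY(1) s2(1) Sc by auto
          have YY: "Y \<union> Y2 \<subseteq> carrier M" using sY(3) s2(3) NC by auto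
          have sp: "submodule (mod_span D M (Y \<union> Y2)) D M" using span_sub[OF assms(2) YY] .
          have m1: "mod_span D M Y \<subseteq> mod_span D M (Y \<union> Y2)" using span_mono[OF assms(2) YY] by auto
          have m2: "mod_span D M Y2 \<subseteq> mod_span D M (Y \<union> Y2)" using span_mono[OF assms(2) YY] by auto
          have "\<forall>Q\<in>insert P A. \<forall>x\<in>N. \<exists>t\<in>carrier D - Q. (t \<otimes>\<^bsub>D\<^esub> (s \<otimes>\<^bsub>D\<^esub> s2)) \<odot>\<^bsub>M\<^esub> x \<in> mod_span D M (Y \<union> Y2)"
          proof (intro ballI)
            fix Q x assume Q: "Q \<in> insert P A" and x: "x \<in> N"
            have xc: "x \<in> carrier M" using x NC by auto
            show "\<exists>t\<in>carrier D - Q. (t \<otimes>\<^bsub>D\<^esub> (s \<otimes>\<^bsub>D\<^esub> s2)) \<odot>\<^bsub>M\<^esub> x \<in> mod_span D M (Y \<union> Y2)"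
            proof (cases "Q = P")
              case True
              then obtain t where t: "t \<in> carrier D - Q" "(t \<otimes>\<^bsub>D\<^esub> s2) \<odot>\<^bsub>M\<^esub> x \<in> mod_span D M Y2"
                using s2(4) x by auto
              have "(t \<otimes>\<^bsub>D\<^esub> (s \<otimes>\<^bsub>D\<^esub> s2)) \<odot>\<^bsub>M\<^esub> x = s \<odot>\<^bsub>M\<^esub> ((t \<otimes>\<^bsub>D\<^esub> s2) \<odot>\<^bsub>M\<^esub> x)"
                using t(1) sc xc by (simp add: smult_assoc1[symmetric] m_ac)
              then show ?thesis using t m2 sm_smult[OF sp sc(1)] by (intro bexI[of _ t]) auto
            next
              case False
              then have "Q \<in> A" using Q by auto
              then obtain t where t: "t \<in> carrier D - Q" "(t \<otimes>\<^bsub>D\<^esub> s) \<odot>\<^bsub>M\<^esub> x \<in> mod_span D M Y"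
                using sY(4) x by blast
              have "(t \<otimes>\<^bsub>D\<^esub> (s \<otimes>\<^bsub>D\<^esub> s2)) \<odot>\<^bsub>M\<^esub> x = s2 \<odot>\<^bsub>M\<^esub> ((t \<otimes>\<^bsub>D\<^esub> s) \<odot>\<^bsub>M\<^esub> x)"
                using t(1) sc xc by (simp add: smult_assoc1[symmetric] m_ac)
              then show ?thesis using t m1 sm_smult[OF sp sc(2)] by (intro bexI[of _ t]) auto
            qed
          qed
          then show "\<exists>s\<in>S. \<exists>Y. finite Y \<and> Y \<subseteq> N \<and>
            (\<forall>Q\<in>insert P A. \<forall>x\<in>N. \<exists>t\<in>carrier D - Q. (t \<otimes>\<^bsub>D\<^esub> s) \<odot>\<^bsub>M\<^esub> x \<in> mod_span D M Y)"
            using Sm[OF sY(1) s2(1)] sY(2,3) s2(2,3) by (intro bexI[of _ "s \<otimes>\<^bsub>D\<^esub> s2"] exI[of _ "Y \<union> Y2"]) auto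
        qed
      qed
      obtain s Y where sY: "s \<in> S" "finite Y" "Y \<subseteq> N"
        "\<forall>P\<in>MaxA. \<forall>x\<in>N. \<exists>t\<in>carrier D - P. (t \<otimes>\<^bsub>D\<^esub> s) \<odot>\<^bsub>M\<^esub> x \<in> mod_span D M Y"
        using claim[OF fin] by auto
      have sc: "s \<in> carrier D" using sY(1) Sc by auto
      define J where "J = mod_span D M (insert a Y)"
      have aYc: "insert a Y \<subseteq> carrier M" using ac sY(3) NC by auto
      have subJ: "submodule J D M" unfolding J_def using span_sub[OF assms(2) aYc] .
      have YJ: "mod_span D M Y \<subseteq> J" unfolding J_def using span_mono[OF assms(2) aYc] by auto
      have aJ: "a \<in> J" unfolding J_def using span_incl[of "insert a Y" D M] by auto
      have "fin_gen_submodule D M J" unfolding fin_gen_submodule_def J_def using sY(2) aYc by auto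
      moreover have "J \<subseteq> N" unfolding J_def using span_least[OF subN] a(1) sY(3) by auto
      moreover have "\<forall>x\<in>N. s \<odot>\<^bsub>M\<^esub> x \<in> J"
      proof
        fix x assume x: "x \<in> N"
        have xc: "x \<in> carrier M" using x NC by auto
        define z where "z = s \<odot>\<^bsub>M\<^esub> x"
        have zc: "z \<in> carrier M" unfolding z_def using sc xc by auto
        define I where "I = {d \<in> carrier D. d \<odot>\<^bsub>M\<^esub> z \<in> J}"
        have idI: "ideal I D"
        proof (rule idealI)
          show "ring D" by (rule ring_axioms)
          show "subgroup I (add_monoid D)"
          proof (rule subgroup.intro)
            show "I \<subseteq> carrier (add_monoid D)" unfolding I_def by auto
            show "x \<otimes>\<^bsub>add_monoid D\<^esub> y \<in> I" if "x \<in> I" "y \<in> I" for x y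
              using that sm_add[OF subJ] zc unfolding I_def by (auto simp: smult_l_distr)
            show "\<one>\<^bsub>add_monoid D\<^esub> \<in> I" unfolding I_def using zc sm_zero[OF subJ] by auto
            show "inv\<^bsub>add_monoid D\<^esub> x \<in> I" if "x \<in> I" for x
            proof -
              have e: "inv\<^bsub>add_monoid D\<^esub> x = \<ominus>\<^bsub>D\<^esub> x" by (simp add: a_inv_def)
              show ?thesis unfolding e using that sm_inv[OF subJ] zc unfolding I_def
                by (auto simp: smult_l_minus)
            qed
          qed
          show "x \<otimes>\<^bsub>D\<^esub> d \<in> I" if "d \<in> I" "x \<in> carrier D" for d x
            using that sm_smult[OF subJ] zc unfolding I_def by (auto simp: smult_assoc1)
          show "d \<otimes>\<^bsub>D\<^esub> x \<in> I" if "d \<in> I" "x \<in> carrier D" for d x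
            using that sm_smult[OF subJ] zc unfolding I_def by (auto simp: smult_assoc1 m_comm[of d x])
        qed
        show "s \<odot>\<^bsub>M\<^esub> x \<in> J"
        proof (cases "\<one>\<^bsub>D\<^esub> \<in> I")
          case True
          then show ?thesis unfolding I_def z_def using zc[unfolded z_def] by auto
        next
          case False
          then obtain P where P: "maximalideal P D" "I \<subseteq> P"
            using krull[OF is_cring idI] by blast
          show ?thesis
          proof (cases "Ia \<subseteq> P")
            case True
            then have "P \<in> MaxA" unfolding MaxA_def using P by auto
            then obtain t where t: "t \<in> carrier D - P" "(t \<otimes>\<^bsub>D\<^esub> s) \<odot>\<^bsub>M\<^esub> x \<in> mod_span D M Y"
              using sY(4) x by blast
            then have "t \<odot>\<^bsub>M\<^esub> z \<in> J" unfolding z_def using YJ sc xc by (auto simp: smult_assoc1)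
            then have "t \<in> I" unfolding I_def using t by auto
            then show ?thesis using P t by auto
          next
            case False
            then obtain c where c: "c \<in> Ia" "c \<notin> P" by auto
            then have cc: "c \<in> carrier D" "c \<odot>\<^bsub>M\<^esub> z \<in> cyclic_sub D M a"
              using zc unfolding Ia_def mod_colon_def by auto
            then obtain d where "d \<in> carrier D" "c \<odot>\<^bsub>M\<^esub> z = d \<odot>\<^bsub>M\<^esub> a" unfolding cyclic_sub_def by auto
            then have "c \<odot>\<^bsub>M\<^esub> z \<in> J" using sm_smult[OF subJ _ aJ] by auto
            then have "c \<in> I" unfolding I_def using cc by auto
            then show ?thesis using P c by auto
          qed
        qed
      qed
      ultimately show ?thesis unfolding S_finite_def using sY(1) by blast
    qed
  qed
  show ?thesis using part1 part2 by blast
qed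

end
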